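(* For any $\epsilon>0$ and any positive integer $r$, there exist a graph $G$ with $\Delta(G)=r$ and a tree $T$, each with $n$ vertices (for some $n$), such that $3\Delta(G)+\ell(T)-2<(1+\epsilon)n$, but $G$ and $T$ do not pack.
   Context: All graphs are finite and simple; $\Delta(G)$ is the maximum degree of $G$ and $\ell(T)$ is the number of leaves (vertices of degree $1$) of $T$. For graphs $G$ and $H$ with $|V(G)|\ge |V(H)|$, we say $G$ and $H$ pack if there is an injective function $f:V(H)\to V(G)$ such that for every edge $xy\in E(H)$, $f(x)f(y)\notin E(G)$. *)

theory Defs
  imports Main "HOL-Library.Disjoint_Sets" Complex_Main
begin

definition sgraph :: "'a set \<Rightarrow> 'a set set \<Rightarrow> bool" where
  "sgraph V E \<longleftrightarrow> finite V \<and> (\<forall>e\<in>E. \<exists>x y. x \<noteq> y \<and> x \<in> V \<and> y \<in> V \<and> e = {x, y})"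

definition adj :: "'a set set \<Rightarrow> 'a \<Rightarrow> 'a \<Rightarrow> bool" where
  "adj E x y \<longleftrightarrow> {x, y} \<in> E"

definition degree :: "'a set \<Rightarrow> 'a set set \<Rightarrow> 'a \<Rightarrow> nat" where
  "degree V E v = card {u \<in> V. {u, v} \<in> E}"

definition max_degree :: "'a set \<Rightarrow> 'a set set \<Rightarrow> nat" where
  "max_degree V E = Max (degree V E ` V)"

definition num_leaves :: "'a set \<Rightarrow> 'a set set \<Rightarrow> nat" where
  "num_leaves V E = card {v \<in> V. degree V E v = 1}"

definition connected_graph :: "'a set \<Rightarrow> 'a set set \<Rightarrow> bool" where
  "connected_graph V E \<longleftrightarrow> (\<forall>x\<in>V. \<forall>y\<in>V. (adj E)\<^sup>*\<^sup>* x y)"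

definition is_cycle :: "'a set \<Rightarrow> 'a set set \<Rightarrow> 'a list \<Rightarrow> bool" where
  "is_cycle V E cs \<longleftrightarrow> length cs \<ge> 3 \<and> distinct cs \<and> set cs \<subseteq> V \<and>
     (\<forall>i. Suc i < length cs \<longrightarrow> adj E (cs ! i) (cs ! Suc i)) \<and>
     adj E (last cs) (hd cs)"

definition acyclic_graph :: "'a set \<Rightarrow> 'a set set \<Rightarrow> bool" where
  "acyclic_graph V E \<longleftrightarrow> \<not> (\<exists>cs. is_cycle V E cs)"

definition is_tree :: "'a set \<Rightarrow> 'a set set \<Rightarrow> bool" where
  "is_tree V E \<longleftrightarrow> sgraph V E \<and> V \<noteq> {} \<and> connected_graph V E \<and> acyclic_graph V E"

definition packs :: "'a set \<Rightarrow> 'a set set \<Rightarrow> 'b set \<Rightarrow> 'b set set \<Rightarrow> bool" where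
  "packs VG EG VH EH \<longleftrightarrow>
     (\<exists>f. inj_on f VH \<and> f ` VH \<subseteq> VG \<and> (\<forall>x\<in>VH. \<forall>y\<in>VH. {x, y} \<in> EH \<longrightarrow> {f x, f y} \<notin> EG))"

end

theory Submission
  imports Defs
begin
definition blockE :: "nat \<Rightarrow> nat \<Rightarrow> nat set set" where
  "blockE N k = {{a,b}|a b. a<N \<and> b<N \<and> a\<noteq>b \<and> a div k = b div k}"

lemma memEG: "{u,v} \<in> blockE N k \<longleftrightarrow> u<N \<and> v<N \<and> u\<noteq>v \<and> u div k = v div k"
  unfolding blockE_def by (auto simp: doubleton_eq_iff)

lemma blk: assumes "(k::nat) > 0" shows "u div k = q \<longleftrightarrow> u \<in> {q * k ..< q * k + k}"
proof -
  have "u div k = q \<longleftrightarrow> q \<le> u div k \<and> u div k < Suc q" by auto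
  also have "\<dots> \<longleftrightarrow> q * k \<le> u \<and> u < Suc q * k"
    using assms by (simp add: less_eq_div_iff_mult_less_eq div_less_iff_less_mult del: mult_Suc)
  finally show ?thesis by (simp add: add.commute)
qed

lemma nbr:
  assumes k: "k > 0" and v: "v < m*k"
  shows "{u \<in> {0..<m*k}. {u,v} \<in> blockE (m*k) k} = {v div k * k ..< v div k * k + k} - {v}"
proof -
  have q: "v div k < m" using v k by (simp add: less_mult_imp_div_less)
  hence "Suc (v div k) * k \<le> m*k" by (intro mult_le_mono1) simp
  hence le: "v div k * k + k \<le> m*k" by simp
  show ?thesis
  proof (intro set_eqI iffI)
    fix u assume "u \<in> {u \<in> {0..<m*k}. {u,v} \<in> blockE (m*k) k}"
    hence "u \<noteq> v" "u div k = v div k" by (simp_all add: memEG)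
    thus "u \<in> {v div k * k ..< v div k * k + k} - {v}" using blk[OF k, of u "v div k"] by simp
  next
    fix u assume u: "u \<in> {v div k * k ..< v div k * k + k} - {v}"
    hence "u div k = v div k" "u \<noteq> v" "u < m*k" using blk[OF k, of u "v div k"] le by auto
    thus "u \<in> {u \<in> {0..<m*k}. {u,v} \<in> blockE (m*k) k}"
      using v by (simp add: memEG)
  qed
qed

theorem proposition10:
  fixes \<epsilon> :: real and r :: nat
  assumes "\<epsilon> > 0" and "r \<ge> 1"
  shows "\<exists>(n::nat) (VG::nat set) EG (VT::nat set) ET.
           sgraph VG EG \<and> card VG = n \<and> max_degree VG EG = r \<and>
           is_tree VT ET \<and> card VT = n \<and>
           3 * real (max_degree VG EG) + real (num_leaves VT ET) - 2 < (1 + \<epsilon>) * real n \<and>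
           \<not> packs VG EG VT ET"
proof -
  define k where "k = r + 1"
  have k: "k > 0" "k \<ge> 2" using assms(2) by (auto simp: k_def)
  obtain m :: nat where m: "real m > 3 * real r / \<epsilon>" using reals_Archimedean2 by blast
  have m1: "m \<ge> 1"
  proof (rule ccontr)
    assume "\<not> m \<ge> 1" hence "m = 0" by simp
    with m have "3 * real r / \<epsilon> < 0" by simp
    thus False using assms by (simp add: divide_less_0_iff)
  qed
  define n where "n = m * k"
  have "1 * 2 \<le> m * k" using m1 k(2) by (intro mult_le_mono) 
  hence n2: "n \<ge> 2" by (simp add: n_def)
  define V :: "nat set" where "V = {0..<n}"
  define EG where "EG = blockE n k"
  define ET :: "nat set set" where "ET = {{0,i}|i. 0<i \<and> i<n}"
  have cardV: "card V = n" by (simp add: V_def)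
  have sg: "sgraph V EG" unfolding sgraph_def V_def EG_def blockE_def by auto
  have degG: "degree V EG v = r" if "v \<in> V" for v
  proof -
    have "v < m*k" using that by (simp add: V_def n_def)
    have "degree V EG v = card ({v div k * k ..< v div k * k + k} - {v})"
      unfolding degree_def V_def EG_def n_def using nbr[OF k(1) \<open>v < m*k\<close>] by simp
    also have "\<dots> = k - 1"
      using blk[OF k(1), of v "v div k"] by (simp add: card_Diff_singleton)
    finally show ?thesis by (simp add: k_def)
  qed
  have VG_ne: "V \<noteq> {}" using n2 by (auto simp: V_def)
  have "degree V EG ` V = {r}" using degG VG_ne by auto
  hence maxd: "max_degree V EG = r" by (simp add: max_degree_def)
  have memET: "{x,y} \<in> ET \<longleftrightarrow> (x = 0 \<and> 0<y \<and> y<n) \<or> (y = 0 \<and> 0<x \<and> x<n)" for x y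
    by (auto simp: ET_def doubleton_eq_iff)
  have sgT: "sgraph V ET" unfolding sgraph_def
  proof (intro conjI ballI)
    show "finite V" by (simp add: V_def)
    fix e assume "e \<in> ET"
    then obtain i where i: "0 < i" "i < n" "e = {0, i}" by (auto simp: ET_def)
    show "\<exists>x y. x \<noteq> y \<and> x \<in> V \<and> y \<in> V \<and> e = {x, y}"
      by (rule exI[of _ 0], rule exI[of _ i]) (use i in \<open>auto simp: V_def\<close>)
  qed
  have adj0: "adj ET 0 x" "adj ET x 0" if "x \<in> V" "x \<noteq> 0" for x
    using that by (auto simp: adj_def memET V_def)
  have conn: "connected_graph V ET"
    unfolding connected_graph_def
  proof (intro ballI)
    fix x y assume xy: "x \<in> V" "y \<in> V"
    have a: "(adj ET)\<^sup>*\<^sup>* x 0"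
      using adj0(2)[OF xy(1)] by (cases "x = 0") auto
    have b: "(adj ET)\<^sup>*\<^sup>* 0 y"
      using adj0(1)[OF xy(2)] by (cases "y = 0") auto
    show "(adj ET)\<^sup>*\<^sup>* x y" using a b by (rule rtranclp_trans)
  qed
  have acyc: "acyclic_graph V ET"
    unfolding acyclic_graph_def
  proof
    assume "\<exists>cs. is_cycle V ET cs"
    then obtain cs where c: "is_cycle V ET cs" by blast
    have len: "length cs \<ge> 3" and d: "distinct cs"
      and st: "\<And>i. Suc i < length cs \<Longrightarrow> adj ET (cs ! i) (cs ! Suc i)"
      and lh: "adj ET (last cs) (hd cs)" using c by (auto simp: is_cycle_def)
    have e: "\<And>x y. adj ET x y \<Longrightarrow> x = 0 \<or> y = 0" by (auto simp: adj_def memET)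
    have ne: "cs ! i \<noteq> cs ! j" if "i < length cs" "j < length cs" "i \<noteq> j" for i j
      using d that nth_eq_iff_index_eq by blast
    have hd: "hd cs = cs ! 0" using len by (intro hd_conv_nth) auto
    have la: "last cs = cs ! (length cs - 1)" using len by (intro last_conv_nth) auto
    show False
    proof (cases "cs ! 0 = 0")
      case True
      have "cs ! 1 \<noteq> 0" "cs ! 2 \<noteq> 0" using ne[of 0 1] ne[of 0 2] len True by (auto simp flip: length_greater_0_conv)
      thus False using e[OF st[of 1]] len by (auto simp: numeral_2_eq_2)
    next
      case False
      hence c1: "cs ! 1 = 0" using e[OF st[of 0]] len by auto
      have "cs ! (length cs - 1) \<noteq> 0" using ne[of 1 "length cs - 1"] len c1 by auto
      thus False using e[OF lh] hd la False by auto
    qed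
  qed
  have tree: "is_tree V ET" using sgT VG_ne conn acyc by (simp add: is_tree_def)
  have "card {v \<in> V. degree V ET v = 1} \<le> card V"
    by (rule card_mono) (auto simp: V_def)
  hence leaves: "num_leaves V ET \<le> n" unfolding num_leaves_def using cardV by simp
  have ineq: "3 * real r + real n - 2 < (1 + \<epsilon>) * real n"
  proof -
    have "3 * real r < \<epsilon> * real m" using m assms(1) by (simp add: pos_divide_less_eq mult.commute)
    also have "m * 1 \<le> m * k" using k by (intro mult_le_mono2) auto
    hence "real (m * 1) \<le> real (m * k)" by (rule of_nat_mono)
    hence "real m \<le> real n" by (simp only: n_def mult_1_right)
    hence "\<epsilon> * real m \<le> \<epsilon> * real n"
      using assms(1) by (intro mult_left_mono) auto
    finally show ?thesis by (simp add: algebra_simps)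
  qed
  have nopack: "\<not> packs V EG V ET"
  proof
    assume "packs V EG V ET"
    then obtain f where f: "inj_on f V" "f ` V \<subseteq> V"
      and h: "\<forall>x\<in>V. \<forall>y\<in>V. {x, y} \<in> ET \<longrightarrow> {f x, f y} \<notin> EG"
      unfolding packs_def by blast
    have "card (f ` V) = card V" using f(1) by (rule card_image)
    hence surj: "f ` V = V"
      using f(2) by (intro card_subset_eq) (auto simp: V_def)
    have z: "0 \<in> V" using n2 by (simp add: V_def)
    have "degree V EG (f 0) = r" using degG f z by auto
    hence "{u \<in> V. {u, f 0} \<in> EG} \<noteq> {}" using assms(2) unfolding degree_def by (metis card.empty not_one_le_zero)
    then obtain u where u: "u \<in> V" "{u, f 0} \<in> EG" by blast
    then obtain x where x: "x \<in> V" "u = f x" using surj by blast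
    have "u \<noteq> f 0" using u(2) by (simp add: EG_def memEG)
    hence "x \<noteq> 0" using x by metis
    hence "{0, x} \<in> ET" using x(1) by (simp add: memET V_def)
    hence "{f 0, f x} \<notin> EG" using h z x by blast
    thus False using u x by (simp add: insert_commute)
  qed
  show ?thesis
    apply (rule exI[of _ n], rule exI[of _ V], rule exI[of _ EG], rule exI[of _ V], rule exI[of _ ET])
    using sg cardV maxd tree ineq leaves nopack by auto
qed

end
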